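(* Let $\eta>0$ and $L>0$ be the strong monotonicity and Lipschitz constants of a mapping $F$ as in the context, let $\nu>0$, let $e_0>0$ with $\nu\ge L\sqrt{e_0/2}$, and let $\beta$ be a scalar with $0\le\beta<\frac{\eta}{L}$. Define error functions by $e_{k+1}(\delta_0,\dots,\delta_k)=(1-(\eta-\beta L)\delta_k)e_k(\delta_0,\dots,\delta_{k-1})+(1+\beta)^2\nu^2\delta_k^2$ for $k\ge0$, and let $\delta_0^*=\frac{\eta-\beta L}{2(1+\beta)^2\nu^2}e_0$, $\delta_k^*=\delta_{k-1}^*\big(1-\frac{\eta-\beta L}{2}\delta_{k-1}^*\big)$ for $k\ge1$. Then: (a) for all $k\ge0$, $e_k(\delta_0^*,\dots,\delta_{k-1}^* )=\frac{2(1+\beta)^2\nu^2}{\eta-\beta L}\delta_k^*$; (b) for any $k\ge1$, $(\delta_0^*,\dots,\delta_{k-1}^* )$ is the minimizer of $e_k$ over $\mathbb G_k\triangleq\{\alpha\in\mathbb R^k:0<\alpha_j\le\frac{\eta-\beta L}{(1+\beta)^2L^2},\ j=1,\dots,k\}$; more precisely, for any $(\delta_0,\dots,\delta_{k-1})\in\mathbb G_k$, $e_k(\delta_0,\dots,\delta_{k-1})-e_k(\delta_0^*,\dots,\delta_{k-1}^* )\ge(1+\beta)^2\nu^2(\delta_{k-1}-\delta_{k-1}^* )^2$.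
   Context: $F:X\to\mathbb R^n$ is a single-valued mapping on a nonempty closed convex set $X\subseteq\mathbb R^n$ which is Lipschitz continuous with constant $L$ ($\|F(x)-F(y)\|\le L\|x-y\|$) and strongly monotone with constant $\eta$ ($(F(x)-F(y))^T(x-y)\ge\eta\|x-y\|^2$) on $X$. *)

theory Defs
  imports "HOL-Analysis.Analysis"
begin

text \<open>Error functions e_k: the sequence delta :: nat => real gives the step sizes
  delta_0, delta_1, ...; err ... delta k = e_k(delta_0,...,delta_{k-1}) depends only on
  the first k entries.\<close>
fun err :: "real \<Rightarrow> real \<Rightarrow> real \<Rightarrow> real \<Rightarrow> real \<Rightarrow> (nat \<Rightarrow> real) \<Rightarrow> nat \<Rightarrow> real" where
  "err \<eta> L \<beta> \<nu> e0 \<delta> 0 = e0"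
| "err \<eta> L \<beta> \<nu> e0 \<delta> (Suc k) =
     (1 - (\<eta> - \<beta> * L) * \<delta> k) * err \<eta> L \<beta> \<nu> e0 \<delta> k + (1 + \<beta>)^2 * \<nu>^2 * (\<delta> k)^2"

fun delta_star :: "real \<Rightarrow> real \<Rightarrow> real \<Rightarrow> real \<Rightarrow> real \<Rightarrow> nat \<Rightarrow> real" where
  "delta_star \<eta> L \<beta> \<nu> e0 0 = (\<eta> - \<beta> * L) / (2 * (1 + \<beta>)^2 * \<nu>^2) * e0"
| "delta_star \<eta> L \<beta> \<nu> e0 (Suc k) =
     delta_star \<eta> L \<beta> \<nu> e0 k * (1 - (\<eta> - \<beta> * L) / 2 * delta_star \<eta> L \<beta> \<nu> e0 k)"

end

theory Submission
  imports Defs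
begin


lemma ds_err:
  assumes "\<eta> - \<beta> * L \<noteq> 0" "\<nu> \<noteq> 0" "1 + \<beta> \<noteq> 0"
  shows "err \<eta> L \<beta> \<nu> e0 (delta_star \<eta> L \<beta> \<nu> e0) k
    = 2 * (1 + \<beta>)^2 * \<nu>^2 / (\<eta> - \<beta> * L) * delta_star \<eta> L \<beta> \<nu> e0 k"
proof (induction k)
  case 0 then show ?case using assms by (simp add: field_simps)
next
  case (Suc k)
  define a where "a = \<eta> - \<beta> * L"
  define c where "c = (1 + \<beta>)^2 * \<nu>^2"
  define d where "d = delta_star \<eta> L \<beta> \<nu> e0 k"
  have a0: "a \<noteq> 0" using assms a_def by simp
  have IH: "err \<eta> L \<beta> \<nu> e0 (delta_star \<eta> L \<beta> \<nu> e0) k = 2 * c / a * d"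
    using Suc by (simp add: a_def c_def d_def)
  have "err \<eta> L \<beta> \<nu> e0 (delta_star \<eta> L \<beta> \<nu> e0) (Suc k) = (1 - a * d) * (2 * c / a * d) + c * d^2"
    using IH by (simp add: a_def c_def d_def)
  also have "\<dots> = 2 * c / a * (d * (1 - a / 2 * d))"
    using a0 by (simp add: field_simps power2_eq_square)
  finally show ?case by (simp add: a_def c_def d_def)
qed

lemma ds_bounds:
  assumes a: "0 < \<eta> - \<beta> * L" and aG: "(\<eta> - \<beta> * L) * G \<le> 1"
    and d0: "0 < delta_star \<eta> L \<beta> \<nu> e0 0" "delta_star \<eta> L \<beta> \<nu> e0 0 \<le> G"
  shows "0 < delta_star \<eta> L \<beta> \<nu> e0 k \<and> delta_star \<eta> L \<beta> \<nu> e0 k \<le> G"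
proof (induction k)
  case 0 then show ?case using d0 by simp
next
  case (Suc k)
  define d where "d = delta_star \<eta> L \<beta> \<nu> e0 k"
  define a where "a = \<eta> - \<beta> * L"
  have d: "0 < d" "d \<le> G" using Suc d_def by auto
  have ad: "a * d \<le> 1" proof -
    have "a * d \<le> a * G" using d(2) a a_def by (intro mult_left_mono) auto
    thus ?thesis using aG a_def by simp
  qed
  have "0 < d * (1 - a / 2 * d)" using d ad by (intro mult_pos_pos) auto
  moreover have "d * (1 - a / 2 * d) \<le> d" using d a a_def by (simp add: algebra_simps)
  ultimately show ?case using d by (simp add: d_def a_def)
qed

lemma err_min:
  assumes a: "0 < \<eta> - \<beta> * L" and c: "0 < (1 + \<beta>)^2 * \<nu>^2"
    and ds: "\<And>j. 0 < delta_star \<eta> L \<beta> \<nu> e0 j"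
    and dl: "\<forall>j<k. 0 < \<delta> j \<and> (\<eta> - \<beta> * L) * \<delta> j \<le> 1"
  shows "err \<eta> L \<beta> \<nu> e0 \<delta> k \<ge> err \<eta> L \<beta> \<nu> e0 (delta_star \<eta> L \<beta> \<nu> e0) k
     + (if k = 0 then 0 else (1 + \<beta>)^2 * \<nu>^2 * (\<delta> (k - 1) - delta_star \<eta> L \<beta> \<nu> e0 (k - 1))^2)"
  using dl
proof (induction k)
  case 0 then show ?case by simp
next
  case (Suc k)
  define a where "a = \<eta> - \<beta> * L"
  define c where "c = (1 + \<beta>)^2 * \<nu>^2"
  define d where "d = delta_star \<eta> L \<beta> \<nu> e0 k"
  define x where "x = \<delta> k"
  have anz: "\<eta> - \<beta> * L \<noteq> 0" "\<nu> \<noteq> 0" "1 + \<beta> \<noteq> 0" using a c by auto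
  have ek: "err \<eta> L \<beta> \<nu> e0 (delta_star \<eta> L \<beta> \<nu> e0) k = 2 * c / a * d"
    using ds_err[OF anz] by (simp add: a_def c_def d_def)
  have IH: "err \<eta> L \<beta> \<nu> e0 \<delta> k \<ge> 2 * c / a * d"
    using Suc ek by (auto split: if_splits) (smt (verit) c_def zero_le_power2 mult_nonneg_nonneg c)
  have x: "0 \<le> 1 - a * x" using Suc.prems a_def x_def by auto
  have "err \<eta> L \<beta> \<nu> e0 \<delta> (Suc k) = (1 - a * x) * err \<eta> L \<beta> \<nu> e0 \<delta> k + c * x^2"
    by (simp add: a_def c_def x_def)
  also have "\<dots> \<ge> (1 - a * x) * (2 * c / a * d) + c * x^2"
    using mult_left_mono[OF IH x] by simp
  finally have 1: "err \<eta> L \<beta> \<nu> e0 \<delta> (Suc k) \<ge> (1 - a * x) * (2 * c / a * d) + c * x^2" .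
  have 2: "err \<eta> L \<beta> \<nu> e0 (delta_star \<eta> L \<beta> \<nu> e0) (Suc k) = (1 - a * d) * (2 * c / a * d) + c * d^2"
    using ek by (simp add: a_def c_def d_def)
  have 3: "(1 - a * x) * (2 * c / a * d) + c * x^2 = (1 - a * d) * (2 * c / a * d) + c * d^2 + c * (x - d)^2"
    using a a_def by (simp add: field_simps power2_eq_square)
  show ?case using 1 2 3 by (simp add: c_def x_def d_def)
qed

theorem proposition4:
  fixes F :: "real ^ 'n \<Rightarrow> real ^ 'n" and X :: "(real ^ 'n) set"
    and \<eta> L \<nu> e0 \<beta> :: real
  assumes X_ne: "X \<noteq> {}" and X_closed: "closed X" and X_convex: "convex X"
    and X_nontriv: "\<exists>x\<in>X. \<exists>y\<in>X. x \<noteq> y"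
    and lipschitz: "\<And>x y. x \<in> X \<Longrightarrow> y \<in> X \<Longrightarrow> norm (F x - F y) \<le> L * norm (x - y)"
    and strongly_monotone:
      "\<And>x y. x \<in> X \<Longrightarrow> y \<in> X \<Longrightarrow> (F x - F y) \<bullet> (x - y) \<ge> \<eta> * (norm (x - y))^2"
    and \<eta>_pos: "\<eta> > 0" and L_pos: "L > 0" and \<nu>_pos: "\<nu> > 0" and e0_pos: "e0 > 0"
    and \<nu>_ge: "\<nu> \<ge> L * sqrt (e0 / 2)"
    and \<beta>_nonneg: "0 \<le> \<beta>" and \<beta>_less: "\<beta> < \<eta> / L"
  shows "(\<forall>k. err \<eta> L \<beta> \<nu> e0 (delta_star \<eta> L \<beta> \<nu> e0) k
               = 2 * (1 + \<beta>)^2 * \<nu>^2 / (\<eta> - \<beta> * L) * delta_star \<eta> L \<beta> \<nu> e0 k)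
       \<and> (\<forall>k\<ge>1.
            (\<forall>j<k. 0 < delta_star \<eta> L \<beta> \<nu> e0 j
                    \<and> delta_star \<eta> L \<beta> \<nu> e0 j \<le> (\<eta> - \<beta> * L) / ((1 + \<beta>)^2 * L^2))
          \<and> (\<forall>\<delta> :: nat \<Rightarrow> real.
               (\<forall>j<k. 0 < \<delta> j \<and> \<delta> j \<le> (\<eta> - \<beta> * L) / ((1 + \<beta>)^2 * L^2)) \<longrightarrow>
               err \<eta> L \<beta> \<nu> e0 \<delta> k - err \<eta> L \<beta> \<nu> e0 (delta_star \<eta> L \<beta> \<nu> e0) k
                 \<ge> (1 + \<beta>)^2 * \<nu>^2 * (\<delta> (k - 1) - delta_star \<eta> L \<beta> \<nu> e0 (k - 1))^2))"
  proof -
  define a where "a = \<eta> - \<beta> * L"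
  define G where "G = (\<eta> - \<beta> * L) / ((1 + \<beta>)^2 * L^2)"
  have "\<beta> * L < \<eta>" using \<beta>_less L_pos by (simp add: field_simps)
  hence a: "0 < \<eta> - \<beta> * L" by simp
  have c: "0 < (1 + \<beta>)^2 * \<nu>^2" using \<beta>_nonneg \<nu>_pos by simp
  obtain x y where xy: "x \<in> X" "y \<in> X" "x \<noteq> y" using X_nontriv by blast
  have "\<eta> * (norm (x - y))^2 \<le> (F x - F y) \<bullet> (x - y)" using strongly_monotone xy by auto
  also have "\<dots> \<le> norm (F x - F y) * norm (x - y)" by (rule norm_cauchy_schwarz)
  also have "\<dots> \<le> L * norm (x - y) * norm (x - y)"
    using lipschitz[OF xy(1,2)] by (simp add: mult_right_mono)
  finally have "\<eta> * (norm (x - y))^2 \<le> L * (norm (x - y))^2" by (simp add: power2_eq_square)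
  moreover have "0 < (norm (x - y))^2" using xy by simp
  ultimately have etaL: "\<eta> \<le> L" by simp
  have aL: "\<eta> - \<beta> * L \<le> L" using etaL \<beta>_nonneg L_pos by (smt (verit) mult_nonneg_nonneg)
  have b1: "1 \<le> (1 + \<beta>)^2" using \<beta>_nonneg by (simp add: power2_eq_square algebra_simps)
  have aG: "(\<eta> - \<beta> * L) * G \<le> 1"
  proof -
    have "(\<eta> - \<beta> * L) * G = (\<eta> - \<beta> * L)^2 / ((1 + \<beta>)^2 * L^2)"
      by (simp add: G_def power2_eq_square)
    also have "\<dots> \<le> L^2 / (1 * L^2)"
      using a aL b1 L_pos by (intro frac_le mult_right_mono power_mono) auto
    finally show ?thesis using L_pos by simp
  qed
  have d0pos: "0 < delta_star \<eta> L \<beta> \<nu> e0 0" using a c e0_pos by (simp add: mult.assoc)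
  have "L^2 * (e0/2) \<le> \<nu>^2"
  proof -
    have "(L * sqrt (e0/2))^2 \<le> \<nu>^2" using \<nu>_ge L_pos e0_pos by (intro power_mono) auto
    thus ?thesis using e0_pos by (simp add: power_mult_distrib)
  qed
  hence le: "L^2 * e0 \<le> 2 * \<nu>^2" by simp
  have d0G: "delta_star \<eta> L \<beta> \<nu> e0 0 \<le> G"
  proof -
    have "delta_star \<eta> L \<beta> \<nu> e0 0 = a * e0 / (2 * (1 + \<beta>)^2 * \<nu>^2)" by (simp add: a_def)
    also have "\<dots> \<le> a / ((1 + \<beta>)^2 * L^2)"
      using a a_def c L_pos le b1
      by (simp add: divide_simps) (smt (verit) mult_left_mono mult_pos_pos mult.assoc mult.commute zero_less_power)
    finally show ?thesis by (simp add: G_def a_def)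
  qed
  have bnd: "\<And>k. 0 < delta_star \<eta> L \<beta> \<nu> e0 k \<and> delta_star \<eta> L \<beta> \<nu> e0 k \<le> G"
    using ds_bounds[OF a aG d0pos d0G] .
  have anz: "\<eta> - \<beta> * L \<noteq> 0" "\<nu> \<noteq> 0" "1 + \<beta> \<noteq> 0" using a c by auto
  show ?thesis
  proof (intro conjI allI impI)
    fix k :: nat show "err \<eta> L \<beta> \<nu> e0 (delta_star \<eta> L \<beta> \<nu> e0) k
               = 2 * (1 + \<beta>)^2 * \<nu>^2 / (\<eta> - \<beta> * L) * delta_star \<eta> L \<beta> \<nu> e0 k"
      by (rule ds_err[OF anz])
  next
    fix k j :: nat
    show "0 < delta_star \<eta> L \<beta> \<nu> e0 j" using bnd by blast
  next
    fix k j :: nat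
    show "delta_star \<eta> L \<beta> \<nu> e0 j \<le> (\<eta> - \<beta> * L) / ((1 + \<beta>)^2 * L^2)"
      using bnd G_def by simp
  next
    fix k :: nat and \<delta> :: "nat \<Rightarrow> real"
    assume k: "1 \<le> k" and h: "\<forall>j<k. 0 < \<delta> j \<and> \<delta> j \<le> (\<eta> - \<beta> * L) / ((1 + \<beta>)^2 * L^2)"
    have h2: "\<forall>j<k. 0 < \<delta> j \<and> (\<eta> - \<beta> * L) * \<delta> j \<le> 1"
    proof (intro allI impI)
      fix j assume "j < k"
      hence "0 < \<delta> j" "\<delta> j \<le> G" using h G_def by auto
      moreover have "(\<eta> - \<beta> * L) * \<delta> j \<le> (\<eta> - \<beta> * L) * G"
        using calculation a by (intro mult_left_mono) auto
      ultimately show "0 < \<delta> j \<and> (\<eta> - \<beta> * L) * \<delta> j \<le> 1" using aG by simp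
    qed
    have "\<And>j. 0 < delta_star \<eta> L \<beta> \<nu> e0 j" using bnd by blast
    from err_min[OF a c this h2] k show
      "err \<eta> L \<beta> \<nu> e0 \<delta> k - err \<eta> L \<beta> \<nu> e0 (delta_star \<eta> L \<beta> \<nu> e0) k
                 \<ge> (1 + \<beta>)^2 * \<nu>^2 * (\<delta> (k - 1) - delta_star \<eta> L \<beta> \<nu> e0 (k - 1))^2"
      by simp
  qed
qed

end
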